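(* Let $H\in\mathbb{R}^{n\times n}$ be symmetric with $\lambda_{\min}(H)<0$ and unit eigenvector $v_1$ for $\lambda_{\min}(H)$, let $g\in\mathbb{R}^n$ with $g^\intercal v_1\neq0$, let $f(z)=\frac12z^\intercal Hz+g^\intercal z$ and $\beta=\|H\|_{\mathrm{op}}$. Let $0<\eta<1/\beta$ and $z_0=-\alpha\frac{g}{\|g\|}$ with $0<\alpha<\min\big(1,\frac{\|g\|^3}{|g^\intercal Hg|}\big)$, and let $z_{t+1}=z_t-\eta\nabla f(z_t)$. Then, as long as the iterates remain in the region $\|z_t\|<1$ (where the projected/proximal gradient step onto the unit ball coincides with this plain gradient step), $\|z_t\|$ is monotonically nondecreasing in $t$.
   Context: $\nabla f(z)=Hz+g$; $\|H\|_{\mathrm{op}}$ is the operator norm. *)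

theory Defs
  imports "HOL-Analysis.Analysis"
begin

definition is_eigenvalue :: "real^'n^'n \<Rightarrow> real \<Rightarrow> bool" where
  "is_eigenvalue H mu \<longleftrightarrow> (\<exists>x. x \<noteq> 0 \<and> H *v x = mu *\<^sub>R x)"

definition is_lambda_min :: "real^'n^'n \<Rightarrow> real \<Rightarrow> bool" where
  "is_lambda_min H lam \<longleftrightarrow> is_eigenvalue H lam \<and> (\<forall>mu. is_eigenvalue H mu \<longrightarrow> lam \<le> mu)"

definition quad_f :: "real^'n^'n \<Rightarrow> real^'n \<Rightarrow> real^'n \<Rightarrow> real" where
  "quad_f H g z = (1/2) * (z \<bullet> (H *v z)) + g \<bullet> z"

definition grad_f :: "real^'n^'n \<Rightarrow> real^'n \<Rightarrow> real^'n \<Rightarrow> real^'n" where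
  "grad_f H g z = H *v z + g"

end

theory Submission
  imports Defs
begin

lemma fp: "(f ^^ k) (f x) = (f ^^ Suc k) x"
  by (simp only: funpow_Suc_right o_apply)

lemma pow_sym:
  fixes A :: "'a::real_inner \<Rightarrow> 'a"
  assumes sym: "\<And>x y. A x \<bullet> y = x \<bullet> A y"
  shows "(A ^^ k) x \<bullet> y = x \<bullet> (A ^^ k) y"
proof (induction k arbitrary: y)
  case 0 then show ?case by simp
next
  case (Suc k)
  have "(A ^^ Suc k) x \<bullet> y = (A ^^ k) x \<bullet> A y" by (simp add: sym)
  also have "\<dots> = x \<bullet> (A ^^ k) (A y)" by (rule Suc)
  also have "\<dots> = x \<bullet> (A ^^ Suc k) y" by (simp only: fp)
  finally show ?case .
qed

lemma pow_psd:
  fixes A :: "'a::real_inner \<Rightarrow> 'a"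
  assumes sym: "\<And>x y. A x \<bullet> y = x \<bullet> A y" and psd: "\<And>x. 0 \<le> x \<bullet> A x"
  shows "0 \<le> x \<bullet> (A ^^ j) x"
proof (induction j arbitrary: x rule: less_induct)
  case (less j)
  show ?case
  proof (cases j)
    case 0 then show ?thesis by simp
  next
    case (Suc i)
    show ?thesis
    proof (cases i)
      case 0 then show ?thesis using Suc psd by simp
    next
      case (Suc l)
      have "(A ^^ j) x = A ((A ^^ l) (A x))" using Suc \<open>j = Suc i\<close> by (simp only: fp funpow.simps o_apply)
      then have "x \<bullet> (A ^^ j) x = A x \<bullet> (A ^^ l) (A x)" by (simp add: sym)
      moreover have "0 \<le> A x \<bullet> (A ^^ l) (A x)" using less Suc \<open>j = Suc i\<close> by simp
      ultimately show ?thesis by simp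
    qed
  qed
qed

lemma quad_disc:
  fixes a b c :: real
  assumes h: "\<And>r. 0 \<le> a + 2 * r * b + r^2 * c" and c: "0 \<le> c"
  shows "b^2 \<le> a * c"
proof (cases "c = 0")
  case True
  have "b = 0"
  proof (rule ccontr)
    assume "b \<noteq> 0"
    have "0 \<le> a + 2 * (-(a+1)/(2*b)) * b" using h[of "-(a+1)/(2*b)"] True by simp
    also have "\<dots> = -1" using \<open>b \<noteq> 0\<close> by (simp add: field_simps)
    finally show False by simp
  qed
  then show ?thesis using True by simp
next
  case False
  then have cp: "c > 0" using c by simp
  have "0 \<le> a + 2 * (-b/c) * b + (-b/c)^2 * c" by (rule h)
  also have "\<dots> = a - b^2/c" using cp by (simp add: field_simps power2_eq_square)
  finally have "b^2/c \<le> a" by simp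
  then show ?thesis using cp by (simp add: field_simps mult.commute)
qed

lemma psd_cs:
  fixes T :: "'a::real_inner \<Rightarrow> 'a"
  assumes lin: "linear T" and sym: "\<And>x y. T x \<bullet> y = x \<bullet> T y" and psd: "\<And>x. 0 \<le> x \<bullet> T x"
  shows "(u \<bullet> T v)^2 \<le> (u \<bullet> T u) * (v \<bullet> T v)"
proof (rule quad_disc)
  fix r :: real
  have "0 \<le> (u + r *\<^sub>R v) \<bullet> T (u + r *\<^sub>R v)" by (rule psd)
  also have "\<dots> = u \<bullet> T u + r * (u \<bullet> T v) + r * (v \<bullet> T u) + r^2 * (v \<bullet> T v)"
    using lin by (simp add: linear_add linear_scale inner_add_left inner_add_right power2_eq_square algebra_simps)
  also have "v \<bullet> T u = u \<bullet> T v" by (metis sym inner_commute)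
  finally show "0 \<le> u \<bullet> T u + 2 * r * (u \<bullet> T v) + r^2 * (v \<bullet> T v)" by simp
qed (rule psd)

lemma moment_lemma:
  fixes m :: "nat \<Rightarrow> real"
  assumes nn: "\<And>k. 0 \<le> m k" and cs: "\<And>k. (m (Suc k))^2 \<le> m k * m (Suc (Suc k))"
    and a: "a > 0" and base: "b * m 0 \<le> a * m 1"
  shows "b * m t \<le> a * m (Suc t)"
proof (cases "b \<le> 0")
  case True
  then show ?thesis using nn[of t] nn[of "Suc t"] a
    by (meson mult_nonneg_nonneg mult_nonpos_nonneg order_trans less_imp_le)
next
  case False
  show ?thesis
  proof (induction t)
    case 0 then show ?case using base by simp
  next
    case (Suc k)
    show ?case
    proof (cases "m k = 0")
      case True
      then have "m (Suc k) = 0" using cs[of k] by simp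
      then show ?thesis using nn[of "Suc (Suc k)"] a by simp
    next
      case False
      then have mk: "m k > 0" using nn[of k] by simp
      have "m k * (b * m (Suc k)) = m (Suc k) * (b * m k)" by simp
      also have "\<dots> \<le> m (Suc k) * (a * m (Suc k))"
        using Suc nn[of "Suc k"] by (simp add: mult_left_mono)
      also have "\<dots> = a * (m (Suc k))^2" by (simp add: power2_eq_square)
      also have "\<dots> \<le> a * (m k * m (Suc (Suc k)))" using cs[of k] a by simp
      also have "\<dots> = m k * (a * m (Suc (Suc k)))" by simp
      finally show ?thesis using mk by simp
    qed
  qed
qed

theorem mainTheorem5:
  fixes H :: "real^'n^'n" and g v1 :: "real^'n" and lam eta alpha :: real
    and z :: "nat \<Rightarrow> real^'n"
  assumes symH: "transpose H = H"
    and lmin: "is_lambda_min H lam" and lneg: "lam < 0"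
    and v1_unit: "norm v1 = 1" and v1_eig: "H *v v1 = lam *\<^sub>R v1"
    and gv1: "g \<bullet> v1 \<noteq> 0"
    and eta_pos: "0 < eta" and eta_lt: "eta < 1 / onorm (\<lambda>x. H *v x)"
    and alpha_pos: "0 < alpha" and alpha_lt1: "alpha < 1"
    and alpha_lt2: "g \<bullet> (H *v g) \<noteq> 0 \<longrightarrow> alpha < norm g ^ 3 / \<bar>g \<bullet> (H *v g)\<bar>"
    and z0: "z 0 = - (alpha / norm g) *\<^sub>R g"
    and zstep: "\<And>t. z (Suc t) = z t - eta *\<^sub>R grad_f H g (z t)"
  shows "\<forall>t. (\<forall>s\<le>Suc t. norm (z s) < 1) \<longrightarrow> norm (z t) \<le> norm (z (Suc t))"
proof -
  define A where "A = (\<lambda>x::real^'n. x - eta *\<^sub>R (H *v x))"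
  have Hsym: "(H *v x) \<bullet> y = x \<bullet> (H *v y)" for x y
  proof -
    have "H *v x = x v* H" using vector_transpose_matrix[of x H] symH by simp
    then show ?thesis by (simp add: dot_lmul_matrix)
  qed
  have linH: "linear ((*v) H)" by (rule matrix_vector_mul_linear)
  have lin: "linear A" unfolding A_def
    by (intro linearI) (simp_all add: linear_add[OF linH] linear_scale[OF linH] algebra_simps)
  have sym: "A x \<bullet> y = x \<bullet> A y" for x y
    unfolding A_def by (simp add: inner_diff_left inner_diff_right Hsym)
  have blH: "bounded_linear ((*v) H)" using linH by (simp add: linear_conv_bounded_linear)
  have onpos: "onorm ((*v) H) > 0"
  proof (rule ccontr)
    assume "\<not> onorm ((*v) H) > 0"
    then have "onorm ((*v) H) \<le> 0" by simp
    then have "1 / onorm ((*v) H) \<le> 0" using divide_nonneg_nonpos[of 1 "onorm ((*v) H)"] by simp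
    then show False using eta_pos eta_lt by linarith
  qed
  have etaon: "eta * onorm ((*v) H) \<le> 1" using eta_lt onpos by (simp add: field_simps)
  have psd: "0 \<le> x \<bullet> A x" for x
  proof -
    have "\<bar>x \<bullet> (H *v x)\<bar> \<le> norm x * norm (H *v x)" by (rule Cauchy_Schwarz_ineq2)
    also have "\<dots> \<le> norm x * (onorm ((*v) H) * norm x)"
      using onorm[OF blH, of x] by (simp add: mult_left_mono)
    finally have h1: "x \<bullet> (H *v x) \<le> onorm ((*v) H) * (norm x)^2"
      by (simp add: power2_eq_square algebra_simps)
    have "eta * (x \<bullet> (H *v x)) \<le> eta * (onorm ((*v) H) * (norm x)^2)"
      using h1 eta_pos by simp
    also have "\<dots> \<le> (norm x)^2" using etaon mult_right_mono[OF etaon, of "(norm x)^2"] by simp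
    finally have "eta * (x \<bullet> (H *v x)) \<le> x \<bullet> x" by (simp add: power2_norm_eq_inner)
    then show ?thesis unfolding A_def by (simp add: inner_diff_right)
  qed
  have linpow: "linear (A ^^ k)" for k
  proof (induction k)
    case 0 then show ?case by (simp add: linear_id id_def[symmetric])
  next
    case (Suc k) then show ?case using linear_compose[OF Suc lin] by (simp add: o_def)
  qed
  have zs: "z (Suc t) = A (z t) - eta *\<^sub>R g" for t
    using zstep[of t] unfolding grad_f_def A_def by (simp add: algebra_simps)
  define d where "d t = z (Suc t) - z t" for t
  have dsuc: "d (Suc t) = A (d t)" for t
    unfolding d_def using zs[of t] zs[of "Suc t"] by (simp add: linear_diff[OF lin])
  have dpow: "d t = (A ^^ t) (d 0)" for t
    by (induction t) (simp_all add: dsuc)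
  have zsum: "z t = z 0 + (\<Sum>k<t. d k)" for t
    by (induction t) (simp_all add: d_def)
  define m where "m k = g \<bullet> (A ^^ k) g" for k
  have powsym: "(A ^^ k) x \<bullet> y = x \<bullet> (A ^^ k) y" for k x y by (rule pow_sym[OF sym])
  have powpsd: "0 \<le> x \<bullet> (A ^^ k) x" for k x by (rule pow_psd[OF sym psd])
  have mnn: "0 \<le> m k" for k unfolding m_def by (rule powpsd)
  have mcs: "(m (Suc k))^2 \<le> m k * m (Suc (Suc k))" for k
  proof -
    have "(g \<bullet> (A ^^ k) (A g))^2 \<le> (g \<bullet> (A ^^ k) g) * (A g \<bullet> (A ^^ k) (A g))"
      by (rule psd_cs[OF linpow powsym powpsd])
    moreover have "g \<bullet> (A ^^ k) (A g) = m (Suc k)" unfolding m_def by (simp only: fp)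
    moreover have "A g \<bullet> (A ^^ k) (A g) = m (Suc (Suc k))"
      unfolding m_def by (simp only: fp funpow.simps o_apply sym)
    ultimately show ?thesis unfolding m_def by simp
  qed
  have key: "0 \<le> z 0 \<bullet> d t" for t
  proof (cases "g = 0")
    case True
    then show ?thesis using z0 by simp
  next
    case False
    define c where "c = alpha / norm g"
    have cpos: "c > 0" unfolding c_def using False alpha_pos by simp
    have base_ineq: "c * (g \<bullet> (H *v g)) \<le> (norm g)^2"
    proof (cases "g \<bullet> (H *v g) > 0")
      case True
      then have "alpha < norm g ^ 3 / (g \<bullet> (H *v g))" using alpha_lt2 by simp
      then have "alpha * (g \<bullet> (H *v g)) < norm g ^ 3" using True by (simp add: field_simps)
      then have "alpha * (g \<bullet> (H *v g)) / norm g < norm g ^ 3 / norm g"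
        using False by (simp add: divide_strict_right_mono)
      then show ?thesis unfolding c_def using False by (simp add: power3_eq_cube power2_eq_square)
    next
      case False
      then show ?thesis using cpos
        by (smt (verit) mult_nonneg_nonpos zero_le_power2)
    qed
    have m0: "m 0 = (norm g)^2" unfolding m_def by (simp add: power2_norm_eq_inner)
    have m1: "m 1 = (norm g)^2 - eta * (g \<bullet> (H *v g))"
      unfolding m_def A_def by (simp add: inner_diff_right power2_norm_eq_inner)
    have base: "(c - eta) * m 0 \<le> c * m 1"
    proof -
      have "c * m 1 - (c - eta) * m 0 = eta * ((norm g)^2 - c * (g \<bullet> (H *v g)))"
        unfolding m0 m1 by (simp add: algebra_simps)
      also have "\<dots> \<ge> 0" using eta_pos base_ineq by simp
      finally show ?thesis by simp
    qed
    have mt: "(c - eta) * m t \<le> c * m (Suc t)"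
      by (rule moment_lemma[OF mnn mcs cpos base])
    have zc: "z 0 = - c *\<^sub>R g" using z0 c_def by simp
    have d0: "d 0 = c *\<^sub>R g - c *\<^sub>R A g - eta *\<^sub>R g"
    proof -
      have "A (z 0) = -(c *\<^sub>R A g)" unfolding zc
        by (simp add: linear_scale[OF lin] linear_neg[OF lin])
      then show ?thesis unfolding d_def zs[of 0] by (simp add: zc algebra_simps)
    qed
    have "z 0 \<bullet> d t = - c * (g \<bullet> (A ^^ t) (d 0))" using zc dpow[of t] by simp
    also have "g \<bullet> (A ^^ t) (d 0) = c * m t - c * m (Suc t) - eta * m t"
      unfolding d0 m_def
      by (simp add: linear_diff[OF linpow] linear_scale[OF linpow] inner_diff_right fp)
    finally have "z 0 \<bullet> d t = c * (c * m (Suc t) - (c - eta) * m t)" by (simp add: algebra_simps)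
    then show ?thesis using mt cpos by simp
  qed
  have inner_nn: "0 \<le> z t \<bullet> d t" for t
  proof -
    have "z t \<bullet> d t = z 0 \<bullet> d t + (\<Sum>k<t. d k \<bullet> d t)"
      unfolding zsum[of t] by (simp add: inner_add_left inner_sum_left)
    moreover have "0 \<le> d k \<bullet> d t" if "k < t" for k
    proof -
      have "d t = (A ^^ (t - k)) (d k)" using that dpow[of t] dpow[of k]
        by (metis funpow_add le_add_diff_inverse2 less_imp_le o_apply)
      then show ?thesis using powpsd by simp
    qed
    then have "0 \<le> (\<Sum>k<t. d k \<bullet> d t)" by (intro sum_nonneg) simp
    ultimately show ?thesis using key[of t] by simp
  qed
  show ?thesis
  proof (intro allI impI)
    fix t
    have "z (Suc t) = z t + d t" by (simp add: d_def)
    then have "z (Suc t) \<bullet> z (Suc t) = z t \<bullet> z t + 2 * (z t \<bullet> d t) + d t \<bullet> d t"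
      by (simp add: inner_add_left inner_add_right inner_commute)
    then have "z t \<bullet> z t \<le> z (Suc t) \<bullet> z (Suc t)" using inner_nn[of t] by simp
    then show "norm (z t) \<le> norm (z (Suc t))" by (simp add: norm_le)
  qed
qed

end
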